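(* Let $\varphi(z,x,y)$ satisfy conditions (C1)–(C5) stated in the context and the inequality $\varphi''(z,x,y)\geq c_7z^{-2}\varphi(z,x,y)$, $z>0$, with a constant $c_7$ independent of $z,x,y$. Assume that a function $\psi(z,x,y)$ is twice continuously differentiable in $z$ for almost all $(x,y)\in\Omega\times\Omega$, that for each $u\in L_{1,loc}(\Omega)$ the function $\psi(|u(x)-u(y)|,x,y)$ is measurable on $\Omega\times\Omega$, and that \[ \psi(0,x,y)=0,\qquad \psi'(0,x,y)=0,\qquad \big|\psi''(z,x,y)\big|\leq c_8\varphi''(z,x,y) \] for almost all $(x,y)\in\Omega\times\Omega$ and all $z>0$, where $c_8<1$ is a constant independent of $z,x,y$. Then the sum $\varphi(z,x,y)+\psi(z,x,y)$ satisfies conditions (C1)–(C5).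
   Context: $\Omega\subseteq\mathbb{R}^d$ is a domain; functions are defined on $\mathbb{R}_+\times\Omega\times\Omega$, derivatives are in the first variable. For a non-negative function $\varphi(t,x,y)$ the conditions are: (C1) for each $u\in L_{1,loc}(\Omega)$ the function $\varphi(|u(x)-u(y)|,x,y)$ is measurable on $\Omega\times\Omega$; (C2) for every $\varepsilon>0$ there is $\delta\in(0,1)$ with $\varphi(\frac{s+t}{2},x,y)\le(1-\delta)\frac{\varphi(s,x,y)+\varphi(t,x,y)}{2}$ for a.a. $(x,y)$ and all $s,t>0$ with $|s-t|\ge\varepsilon\max\{s,t\}$; (C3) there are constants $1<p_-\le p_+$ and $\beta\ge1$ such that $r(t)=\varphi(t,x,y)/t^{p_-}$ satisfies $r(s)\le\beta r(t)$ and $r(t)=\varphi(t,x,y)/t^{p_+}$ satisfies $\beta r(s)\ge r(t)$ for all $0\le s\le t$, a.a. $(x,y)$; (C4) $c_1^{-1}\le\varphi(1,x,y)\le c_1$, $\varphi(0,x,y)=0$, $\varphi(t,x,y)>0$ for $t>0$, a.a. $(x,y)$; (C5) $\varphi$ is differentiable in $t>0$ and $0<t\varphi'(t,x,y)\le c_2\varphi(t,x,y)$ with a constant $c_2>1$. *)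

theory Defs
  imports "HOL-Analysis.Analysis"
begin

definition loc_integrable :: "'a::euclidean_space set \<Rightarrow> ('a \<Rightarrow> real) \<Rightarrow> bool" where
  "loc_integrable \<Omega> u \<longleftrightarrow>
     u \<in> borel_measurable (lebesgue_on \<Omega>) \<and>
     (\<forall>K. compact K \<and> K \<subseteq> \<Omega> \<longrightarrow> set_integrable lebesgue K u)"

abbreviation ae_pairs :: "'a::euclidean_space set \<Rightarrow> ('a \<Rightarrow> 'a \<Rightarrow> bool) \<Rightarrow> bool" where
  "ae_pairs \<Omega> P \<equiv> (AE p in lebesgue. p \<in> \<Omega> \<times> \<Omega> \<longrightarrow> P (fst p) (snd p))"

definition condC1 :: "'a::euclidean_space set \<Rightarrow> (real \<Rightarrow> 'a \<Rightarrow> 'a \<Rightarrow> real) \<Rightarrow> bool" where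
  "condC1 \<Omega> \<phi> \<longleftrightarrow> (\<forall>u. loc_integrable \<Omega> u \<longrightarrow>
     (\<lambda>p. \<phi> \<bar>u (fst p) - u (snd p)\<bar> (fst p) (snd p)) \<in> borel_measurable (lebesgue_on (\<Omega> \<times> \<Omega>)))"

definition condC2 :: "'a::euclidean_space set \<Rightarrow> (real \<Rightarrow> 'a \<Rightarrow> 'a \<Rightarrow> real) \<Rightarrow> bool" where
  "condC2 \<Omega> \<phi> \<longleftrightarrow> (\<forall>\<epsilon>>0. \<exists>\<delta>. 0 < \<delta> \<and> \<delta> < 1 \<and>
     ae_pairs \<Omega> (\<lambda>x y. \<forall>s t. 0 < s \<and> 0 < t \<and> \<bar>s - t\<bar> \<ge> \<epsilon> * max s t \<longrightarrow>
        \<phi> ((s + t) / 2) x y \<le> (1 - \<delta>) * ((\<phi> s x y + \<phi> t x y) / 2)))"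

definition condC3 :: "'a::euclidean_space set \<Rightarrow> (real \<Rightarrow> 'a \<Rightarrow> 'a \<Rightarrow> real) \<Rightarrow> bool" where
  "condC3 \<Omega> \<phi> \<longleftrightarrow> (\<exists>pm pp \<beta>::real. 1 < pm \<and> pm \<le> pp \<and> 1 \<le> \<beta> \<and>
     ae_pairs \<Omega> (\<lambda>x y. \<forall>s t. 0 < s \<and> s \<le> t \<longrightarrow>
        \<phi> s x y / s powr pm \<le> \<beta> * (\<phi> t x y / t powr pm) \<and>
        \<beta> * (\<phi> s x y / s powr pp) \<ge> \<phi> t x y / t powr pp))"

definition condC4 :: "'a::euclidean_space set \<Rightarrow> (real \<Rightarrow> 'a \<Rightarrow> 'a \<Rightarrow> real) \<Rightarrow> bool" where
  "condC4 \<Omega> \<phi> \<longleftrightarrow> (\<exists>c1::real. 0 < c1 \<and>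
     ae_pairs \<Omega> (\<lambda>x y. inverse c1 \<le> \<phi> 1 x y \<and> \<phi> 1 x y \<le> c1 \<and> \<phi> 0 x y = 0 \<and>
        (\<forall>t>0. \<phi> t x y > 0)))"

definition condC5 :: "'a::euclidean_space set \<Rightarrow> (real \<Rightarrow> 'a \<Rightarrow> 'a \<Rightarrow> real) \<Rightarrow> bool" where
  "condC5 \<Omega> \<phi> \<longleftrightarrow> (\<exists>c2::real. 1 < c2 \<and>
     ae_pairs \<Omega> (\<lambda>x y. \<forall>t>0. \<exists>D. ((\<lambda>s. \<phi> s x y) has_real_derivative D) (at t) \<and>
        0 < t * D \<and> t * D \<le> c2 * \<phi> t x y))"

definition conds_C1_C5 :: "'a::euclidean_space set \<Rightarrow> (real \<Rightarrow> 'a \<Rightarrow> 'a \<Rightarrow> real) \<Rightarrow> bool" where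
  "conds_C1_C5 \<Omega> \<phi> \<longleftrightarrow> condC1 \<Omega> \<phi> \<and> condC2 \<Omega> \<phi> \<and> condC3 \<Omega> \<phi> \<and> condC4 \<Omega> \<phi> \<and> condC5 \<Omega> \<phi>"

end

theory Submission
  imports Defs
begin


lemma mono_pos:
  fixes g g' :: "real \<Rightarrow> real"
  assumes "0 < a" "a \<le> b" "\<And>x. a \<le> x \<Longrightarrow> x \<le> b \<Longrightarrow> (g has_real_derivative g' x) (at x)"
    "\<And>x. a \<le> x \<Longrightarrow> x \<le> b \<Longrightarrow> g' x \<ge> 0"
  shows "g a \<le> g b"
  using assms by (intro DERIV_nonneg_imp_nondecreasing[OF assms(2)]) blast

lemma at_pos_within: "(0::real) < z \<Longrightarrow> at z within {0..} = at z"
  by (rule at_within_interior) simp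

lemma lim_right0:
  fixes Q :: "real \<Rightarrow> real"
  assumes "(Q has_real_derivative D) (at 0 within {0..})"
  shows "(Q \<longlongrightarrow> Q 0) (at_right 0)"
proof -
  have "(Q \<longlongrightarrow> Q 0) (at 0 within {0..})"
    using DERIV_continuous[OF assms] by (simp add: continuous_within)
  then show ?thesis by (rule tendsto_within_subset) auto
qed

lemma lower_from_right:
  fixes Q :: "real \<Rightarrow> real"
  assumes "(Q \<longlongrightarrow> 0) (at_right 0)" "\<And>e. 0 < e \<Longrightarrow> e \<le> s \<Longrightarrow> c \<ge> - Q e" "0 < s"
  shows "c \<ge> 0"
proof -
  have "((\<lambda>e. - Q e) \<longlongrightarrow> 0) (at_right 0)" using tendsto_minus[OF assms(1)] by simp
  moreover have "eventually (\<lambda>e. - Q e \<le> c) (at_right 0)"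
    using assms(2) eventually_at_right_real[OF assms(3)] by (auto elim: eventually_mono)
  ultimately show ?thesis by (rule tendsto_upperbound) simp
qed

lemma key_bounds:
  fixes P P1 P2 Q Q1 Q2 :: "real \<Rightarrow> real"
  assumes hP: "\<And>t. t > 0 \<Longrightarrow> (P has_real_derivative P1 t) (at t)"
    and hP1: "\<And>t. t > 0 \<Longrightarrow> (P1 has_real_derivative P2 t) (at t)"
    and P2pos: "\<And>t. t > 0 \<Longrightarrow> P2 t > 0"
    and Ppos: "\<And>t. t > 0 \<Longrightarrow> P t > 0"
    and P1pos: "\<And>t. t > 0 \<Longrightarrow> P1 t > 0"
    and hQ: "\<And>z. z \<ge> 0 \<Longrightarrow> (Q has_real_derivative Q1 z) (at z within {0..})"
    and hQ1: "\<And>z. z \<ge> 0 \<Longrightarrow> (Q1 has_real_derivative Q2 z) (at z within {0..})"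
    and Q0: "Q 0 = 0" and Q10: "Q1 0 = 0"
    and Q2b: "\<And>z. z > 0 \<Longrightarrow> \<bar>Q2 z\<bar> \<le> c8 * P2 z"
  shows "c8 \<ge> 0" "\<And>z. z > 0 \<Longrightarrow> \<bar>Q1 z\<bar> \<le> c8 * P1 z" "\<And>z. z > 0 \<Longrightarrow> \<bar>Q z\<bar> \<le> c8 * P z"
proof -
  show c8: "c8 \<ge> 0"
  proof (rule ccontr)
    assume "\<not> c8 \<ge> 0"
    then have "c8 * P2 1 < 0" using P2pos[of 1] by (simp add: mult_neg_pos)
    with Q2b[of 1] show False by simp
  qed
  have hQa: "\<And>z. z > 0 \<Longrightarrow> (Q has_real_derivative Q1 z) (at z)"
    using hQ at_pos_within by (metis less_imp_le)
  have hQ1a: "\<And>z. z > 0 \<Longrightarrow> (Q1 has_real_derivative Q2 z) (at z)"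
    using hQ1 at_pos_within by (metis less_imp_le)
  have limQ1: "(Q1 \<longlongrightarrow> 0) (at_right 0)" using lim_right0[OF hQ1[of 0]] Q10 by simp
  have limQ: "(Q \<longlongrightarrow> 0) (at_right 0)" using lim_right0[OF hQ[of 0]] Q0 by simp
  show B1: "\<bar>Q1 z\<bar> \<le> c8 * P1 z" if z: "z > 0" for z
  proof -
    have "c8 * P1 z - Q1 z \<ge> 0"
    proof (rule lower_from_right[OF limQ1 _ z])
      fix e assume e: "0 < e" "e \<le> z"
      have "c8 * P1 e - Q1 e \<le> c8 * P1 z - Q1 z"
        apply (rule mono_pos[of e z "\<lambda>x. c8 * P1 x - Q1 x" "\<lambda>x. c8 * P2 x - Q2 x"])
        using e apply simp
        using e apply simp
        using e apply (intro DERIV_diff DERIV_cmult hP1 hQ1a; simp)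
        using e Q2b by (smt (verit) abs_le_D1)
      moreover have "c8 * P1 e \<ge> 0" using c8 P1pos[OF e(1)] by simp
      ultimately show "c8 * P1 z - Q1 z \<ge> - Q1 e" by linarith
    qed
    moreover have "c8 * P1 z + Q1 z \<ge> 0"
    proof (rule lower_from_right[where Q = "\<lambda>e. - Q1 e", OF _ _ z])
      show "((\<lambda>e. - Q1 e) \<longlongrightarrow> 0) (at_right 0)" using tendsto_minus[OF limQ1] by simp
      fix e assume e: "0 < e" "e \<le> z"
      have "c8 * P1 e + Q1 e \<le> c8 * P1 z + Q1 z"
        apply (rule mono_pos[of e z "\<lambda>x. c8 * P1 x + Q1 x" "\<lambda>x. c8 * P2 x + Q2 x"])
        using e apply simp
        using e apply simp
        using e apply (intro DERIV_add DERIV_cmult hP1 hQ1a; simp)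
        using e Q2b by (smt (verit) abs_le_D2)
      moreover have "c8 * P1 e \<ge> 0" using c8 P1pos[OF e(1)] by simp
      ultimately show "c8 * P1 z + Q1 z \<ge> - (- Q1 e)" by linarith
    qed
    ultimately show ?thesis by linarith
  qed
  show "\<bar>Q z\<bar> \<le> c8 * P z" if z: "z > 0" for z
  proof -
    have "c8 * P z - Q z \<ge> 0"
    proof (rule lower_from_right[OF limQ _ z])
      fix e assume e: "0 < e" "e \<le> z"
      have "c8 * P e - Q e \<le> c8 * P z - Q z"
        apply (rule mono_pos[of e z "\<lambda>x. c8 * P x - Q x" "\<lambda>x. c8 * P1 x - Q1 x"])
        using e apply simp
        using e apply simp
        using e apply (intro DERIV_diff DERIV_cmult hP hQa; simp)
        using e B1 by (smt (verit) abs_le_D1)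
      moreover have "c8 * P e \<ge> 0" using c8 Ppos[OF e(1)] by simp
      ultimately show "c8 * P z - Q z \<ge> - Q e" by linarith
    qed
    moreover have "c8 * P z + Q z \<ge> 0"
    proof (rule lower_from_right[where Q = "\<lambda>e. - Q e", OF _ _ z])
      show "((\<lambda>e. - Q e) \<longlongrightarrow> 0) (at_right 0)" using tendsto_minus[OF limQ] by simp
      fix e assume e: "0 < e" "e \<le> z"
      have "c8 * P e + Q e \<le> c8 * P z + Q z"
        apply (rule mono_pos[of e z "\<lambda>x. c8 * P x + Q x" "\<lambda>x. c8 * P1 x + Q1 x"])
        using e apply simp
        using e apply simp
        using e apply (intro DERIV_add DERIV_cmult hP hQa; simp)
        using e B1 by (smt (verit) abs_le_D2)
      moreover have "c8 * P e \<ge> 0" using c8 Ppos[OF e(1)] by simp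
      ultimately show "c8 * P z + Q z \<ge> - (- Q e)" by linarith
    qed
    ultimately show ?thesis by linarith
  qed
qed



lemma lin2: "0 \<le> (A::real) - B - C \<Longrightarrow> 0 \<le> D - B - E - X \<Longrightarrow> C + E = 0 \<Longrightarrow> 2*B + X \<le> A + D"
  by linarith

lemma c2_core:
  fixes F F1 F2 :: "real \<Rightarrow> real"
  assumes hF: "\<And>t. t > 0 \<Longrightarrow> (F has_real_derivative F1 t) (at t)"
    and hF1: "\<And>t. t > 0 \<Longrightarrow> (F1 has_real_derivative F2 t) (at t)"
    and F1pos: "\<And>t. t > 0 \<Longrightarrow> F1 t > 0"
    and Fpos: "\<And>t. t > 0 \<Longrightarrow> F t > 0"
    and F2lb: "\<And>t. t > 0 \<Longrightarrow> F2 t \<ge> K * F t / t\<^sup>2"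
    and K: "K > 0" and st: "0 < s" "s < t"
  shows "F s + F t \<ge> 2 * F ((s+t)/2) + K * F ((s+t)/2) * (t-s)\<^sup>2 / (8 * t\<^sup>2)"
proof -
  define m where "m = (s+t)/2"
  have m: "s < m" "m < t" "0 < m" using st by (auto simp: m_def)
  have F2pos: "F2 x \<ge> 0" if "x > 0" for x
    using F2lb[OF that] K Fpos[OF that] that by (smt (verit) divide_nonneg_pos mult_nonneg_nonneg zero_less_power)
  have F1mono: "F1 x \<le> F1 y" if "0 < x" "x \<le> y" for x y
    using that by (intro mono_pos[of x y F1 F2]) (auto intro: hF1 F2pos)
  have Fmono: "F x \<le> F y" if "0 < x" "x \<le> y" for x y
    using that by (intro mono_pos[of x y F F1]) (auto intro: hF less_imp_le[OF F1pos])
  have G: "F s - F m - F1 m * (s - m) \<ge> 0"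
  proof -
    have "F s - F m - F1 m * (s - m) \<ge> F m - F m - F1 m * (m - m)"
      apply (rule DERIV_nonpos_imp_nonincreasing[of s m "\<lambda>r. F r - F m - F1 m * (r - m)"])
      using m apply simp
      apply (rule exI[of _ "F1 _ - F1 m"])
      using st m by (auto intro!: derivative_eq_intros hF F1mono)
    then show ?thesis by simp
  qed
  define a where "a = K * F m / t\<^sup>2"
  have H: "F t - F m - F1 m * (t - m) - a / 2 * (t - m)\<^sup>2 \<ge> 0"
  proof -
    have H1: "F1 r - F1 m - a * (r - m) \<ge> 0" if r: "m \<le> r" "r \<le> t" for r
    proof -
      have "F1 m - F1 m - a * (m - m) \<le> F1 r - F1 m - a * (r - m)"
      proof (rule mono_pos[of m r _ "\<lambda>x. F2 x - a"])
        show "0 < m" "m \<le> r" using m r by auto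
        fix x assume x: "m \<le> x" "x \<le> r"
        show "((\<lambda>r. F1 r - F1 m - a * (r - m)) has_real_derivative F2 x - a) (at x)"
          using x m by (auto intro!: derivative_eq_intros hF1)
        have "a \<le> K * F x / t\<^sup>2" unfolding a_def
          using Fmono[of m x] x m K by (intro divide_right_mono mult_left_mono) auto
        also have "\<dots> \<le> K * F x / x\<^sup>2"
          using x m r K Fpos[of x] by (intro divide_left_mono mult_pos_pos power_mono) auto
        also have "\<dots> \<le> F2 x" using F2lb[of x] x m by auto
        finally show "0 \<le> F2 x - a" by simp
      qed
      then show ?thesis by simp
    qed
    have "F m - F m - F1 m * (m - m) - a / 2 * (m - m)\<^sup>2 \<le> F t - F m - F1 m * (t - m) - a / 2 * (t - m)\<^sup>2"
    proof (rule mono_pos[of m t _ "\<lambda>r. F1 r - F1 m - a * (r - m)"])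
      show "0 < m" "m \<le> t" using m by auto
      fix x assume x: "m \<le> x" "x \<le> t"
      show "((\<lambda>r. F r - F m - F1 m * (r - m) - a / 2 * (r - m)\<^sup>2) has_real_derivative F1 x - F1 m - a * (x - m)) (at x)"
        using x m by (auto intro!: derivative_eq_intros hF simp: field_simps)
      show "0 \<le> F1 x - F1 m - a * (x - m)" using H1 x by auto
    qed
    then show ?thesis by simp
  qed
  have e1: "(t - m)\<^sup>2 = ((t - s) / 2)\<^sup>2" by (simp add: m_def field_simps)
  have e2: "F1 m * (s - m) + F1 m * (t - m) = 0" by (simp add: m_def field_simps)
  have H': "0 \<le> F t - F m - F1 m * (t - m) - a / 2 * ((t - s) / 2)\<^sup>2"
    using H unfolding e1 .
  have X: "F s + F t \<ge> 2 * F m + a / 2 * ((t - s) / 2)\<^sup>2"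
    by (rule lin2[OF G H' e2])
  have eq: "a / 2 * ((t - s) / 2)\<^sup>2 = K * F m * (t-s)\<^sup>2 / (8 * t\<^sup>2)"
    by (simp add: a_def power_divide field_simps)
  have "F s + F t \<ge> 2 * F m + K * F m * (t-s)\<^sup>2 / (8 * t\<^sup>2)"
    using X unfolding eq .
  then show ?thesis by (simp only: m_def)
qed

lemma lin_aux: "(x::real) \<le> y \<Longrightarrow> z = x' / 8 \<Longrightarrow> x' = x \<Longrightarrow> c = a + z \<Longrightarrow> a + y / 8 \<le> b \<Longrightarrow> c \<le> b"
  by linarith

lemma c2_final:
  fixes F F1 F2 :: "real \<Rightarrow> real"
  assumes hF: "\<And>t. t > 0 \<Longrightarrow> (F has_real_derivative F1 t) (at t)"
    and hF1: "\<And>t. t > 0 \<Longrightarrow> (F1 has_real_derivative F2 t) (at t)"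
    and F1pos: "\<And>t. t > 0 \<Longrightarrow> F1 t > 0"
    and Fpos: "\<And>t. t > 0 \<Longrightarrow> F t > 0"
    and F2lb: "\<And>t. t > 0 \<Longrightarrow> F2 t \<ge> K * F t / t\<^sup>2"
    and K: "K > 0" and e: "\<epsilon> > 0" and st: "0 < s" "0 < t" "\<bar>s - t\<bar> \<ge> \<epsilon> * max s t"
  shows "F ((s + t) / 2) \<le> (1 - (K * \<epsilon>\<^sup>2 / 16) / (1 + K * \<epsilon>\<^sup>2 / 16)) * ((F s + F t) / 2)"
proof -
  define \<kappa> where "\<kappa> = K * \<epsilon>\<^sup>2 / 16"
  have kp: "\<kappa> > 0" using K e by (simp add: \<kappa>_def)
  have main: "F u + F v \<ge> 2 * F ((u+v)/2) * (1 + \<kappa>)" if uv: "0 < u" "u < v" "v - u \<ge> \<epsilon> * v" for u v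
  proof -
    have c: "F u + F v \<ge> 2 * F ((u+v)/2) + K * F ((u+v)/2) * (v-u)\<^sup>2 / (8 * v\<^sup>2)"
      by (rule c2_core[OF hF hF1 F1pos Fpos F2lb K uv(1,2)])
    have "(\<epsilon> * v)\<^sup>2 \<le> (v - u)\<^sup>2" using uv e by (intro power_mono) auto
    then have "\<epsilon>\<^sup>2 \<le> (v-u)\<^sup>2 / v\<^sup>2" using uv by (simp add: field_simps power_mult_distrib)
    moreover have "Fm > 0" if "Fm = F ((u+v)/2)" for Fm using Fpos[of "(u+v)/2"] uv that by auto
    ultimately have "K * F ((u+v)/2) * \<epsilon>\<^sup>2 \<le> K * F ((u+v)/2) * ((v-u)\<^sup>2 / v\<^sup>2)"
      using K by (intro mult_left_mono) auto
    moreover have "K * F ((u+v)/2) * (v-u)\<^sup>2 / (8 * v\<^sup>2) = K * F ((u+v)/2) * ((v-u)\<^sup>2 / v\<^sup>2) / 8"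
      by simp
    moreover have "2 * F ((u+v)/2) * (1 + \<kappa>) = 2 * F ((u+v)/2) + K * F ((u+v)/2) * \<epsilon>\<^sup>2 / 8"
      by (simp add: \<kappa>_def field_simps)
    ultimately show ?thesis using c lin_aux by metis
  qed
  have "F s + F t \<ge> 2 * F ((s+t)/2) * (1 + \<kappa>)"
  proof (cases "s < t")
    case True then show ?thesis using main[of s t] st by (simp add: max_def)
  next
    case False
    then have "t < s \<or> t = s" by auto
    then show ?thesis
    proof
      assume "t < s" then show ?thesis using main[of t s] st by (simp add: max_def add.commute)
    next
      assume ts: "t = s"
      have "\<epsilon> * s > 0" using st e by simp
      moreover have "\<epsilon> * s \<le> 0" using st(3) ts by simp
      ultimately show ?thesis by linarith
    qed
  qed
  then have "F ((s+t)/2) \<le> ((F s + F t) / 2) / (1 + \<kappa>)" using kp by (simp add: field_simps)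
  also have "\<dots> = (1 - \<kappa> / (1 + \<kappa>)) * ((F s + F t) / 2)" using kp by (simp add: field_simps)
  finally show ?thesis by (simp add: \<kappa>_def)
qed



lemma point:
  fixes \<phi> \<psi> :: "real \<Rightarrow> 'a \<Rightarrow> 'a \<Rightarrow> real" and x y :: 'a
  assumes c4: "inverse c1 \<le> \<phi> 1 x y \<and> \<phi> 1 x y \<le> c1 \<and> \<phi> 0 x y = 0 \<and> (\<forall>t>0. \<phi> t x y > 0)"
    and c5: "\<forall>t>0. \<exists>D. ((\<lambda>s. \<phi> s x y) has_real_derivative D) (at t) \<and> 0 < t * D \<and> t * D \<le> c2 * \<phi> t x y"
    and c3: "\<forall>s t. 0 < s \<and> s \<le> t \<longrightarrow>
        \<phi> s x y / s powr pm \<le> \<beta> * (\<phi> t x y / t powr pm) \<and>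
        \<beta> * (\<phi> s x y / s powr pp) \<ge> \<phi> t x y / t powr pp"
    and p2: "\<forall>z>0.
          (deriv (\<lambda>s. \<phi> s x y) has_real_derivative deriv (deriv (\<lambda>s. \<phi> s x y)) z) (at z) \<and>
          deriv (deriv (\<lambda>s. \<phi> s x y)) z \<ge> c7 / z\<^sup>2 * \<phi> z x y"
    and ps: "\<exists>\<psi>1 \<psi>2 :: real \<Rightarrow> real.
          (\<forall>z\<ge>0. ((\<lambda>s. \<psi> s x y) has_real_derivative \<psi>1 z) (at z within {0..})) \<and>
          (\<forall>z\<ge>0. (\<psi>1 has_real_derivative \<psi>2 z) (at z within {0..})) \<and>
          continuous_on {0..} \<psi>2 \<and>
          \<psi> 0 x y = 0 \<and> \<psi>1 0 = 0 \<and>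
          (\<forall>z>0. \<bar>\<psi>2 z\<bar> \<le> c8 * deriv (deriv (\<lambda>s. \<phi> s x y)) z)"
    and c7: "c7 > 0" and c8: "c8 < 1" and c1: "c1 > 0" and c2: "c2 > 0"
    and e_def: "e = max 0 c8"
  shows "(\<forall>\<epsilon>>0. \<forall>s t. 0 < s \<and> 0 < t \<and> \<bar>s - t\<bar> \<ge> \<epsilon> * max s t \<longrightarrow>
        \<phi> ((s + t) / 2) x y + \<psi> ((s + t) / 2) x y \<le>
         (1 - (((1 - e) * c7 / (1 + e)) * \<epsilon>\<^sup>2 / 16) / (1 + ((1 - e) * c7 / (1 + e)) * \<epsilon>\<^sup>2 / 16)) *
          (((\<phi> s x y + \<psi> s x y) + (\<phi> t x y + \<psi> t x y)) / 2))
    \<and> (\<forall>s t. 0 < s \<and> s \<le> t \<longrightarrow>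
        (\<phi> s x y + \<psi> s x y) / s powr pm \<le> (\<beta> * (1 + e) / (1 - e)) * ((\<phi> t x y + \<psi> t x y) / t powr pm) \<and>
        (\<beta> * (1 + e) / (1 - e)) * ((\<phi> s x y + \<psi> s x y) / s powr pp) \<ge> (\<phi> t x y + \<psi> t x y) / t powr pp)
    \<and> (inverse (c1 * (1 + e) / (1 - e)) \<le> \<phi> 1 x y + \<psi> 1 x y \<and> \<phi> 1 x y + \<psi> 1 x y \<le> c1 * (1 + e) / (1 - e) \<and>
        \<phi> 0 x y + \<psi> 0 x y = 0 \<and> (\<forall>t>0. \<phi> t x y + \<psi> t x y > 0))
    \<and> (\<forall>t>0. \<exists>D. ((\<lambda>s. \<phi> s x y + \<psi> s x y) has_real_derivative D) (at t) \<and>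
        0 < t * D \<and> t * D \<le> (c2 * (1 + e) / (1 - e)) * (\<phi> t x y + \<psi> t x y))"
proof -
  define P where "P = (\<lambda>s. \<phi> s x y)"
  define Q where "Q = (\<lambda>s. \<psi> s x y)"
  define P1 where "P1 = deriv P"
  define P2 where "P2 = deriv (deriv P)"
  obtain Q1 Q2 where hQ: "\<And>z. z \<ge> 0 \<Longrightarrow> (Q has_real_derivative Q1 z) (at z within {0..})"
    and hQ1: "\<And>z. z \<ge> 0 \<Longrightarrow> (Q1 has_real_derivative Q2 z) (at z within {0..})"
    and Q0: "Q 0 = 0" and Q10: "Q1 0 = 0"
    and Q2b: "\<And>z. z > 0 \<Longrightarrow> \<bar>Q2 z\<bar> \<le> c8 * P2 z"
    using ps unfolding P_def Q_def P2_def by blast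
  have Ppos: "\<And>t. t > 0 \<Longrightarrow> P t > 0" using c4 by (simp add: P_def)
  have hP: "(P has_real_derivative P1 t) (at t)" "0 < t * P1 t" "t * P1 t \<le> c2 * P t" if t: "t > 0" for t
  proof -
    obtain D where D: "(P has_real_derivative D) (at t)" "0 < t * D" "t * D \<le> c2 * P t"
      using c5 t unfolding P_def by blast
    have "P1 t = D" unfolding P1_def by (rule DERIV_imp_deriv[OF D(1)])
    then show "(P has_real_derivative P1 t) (at t)" "0 < t * P1 t" "t * P1 t \<le> c2 * P t" using D by auto
  qed
  have P1pos: "P1 t > 0" if "t > 0" for t using hP(2)[OF that] that by (simp add: zero_less_mult_iff)
  have hP1: "(P1 has_real_derivative P2 t) (at t)" and P2lb: "P2 t \<ge> c7 / t\<^sup>2 * P t" if "t > 0" for t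
    using p2 that unfolding P_def P1_def P2_def by auto
  have P2pos: "P2 t > 0" if "t > 0" for t
    using P2lb[OF that] c7 Ppos[OF that] that by (smt (verit) divide_pos_pos mult_pos_pos zero_less_power)
  have kb: "c8 \<ge> 0" "\<And>z. z > 0 \<Longrightarrow> \<bar>Q1 z\<bar> \<le> c8 * P1 z" "\<And>z. z > 0 \<Longrightarrow> \<bar>Q z\<bar> \<le> c8 * P z"
    by (rule key_bounds[of P P1 P2 Q Q1 Q2 c8, OF hP(1) hP1 P2pos Ppos P1pos hQ hQ1 Q0 Q10 Q2b], assumption+)+
  have ec: "e = c8" using kb(1) e_def by simp
  have e0: "0 \<le> e" "e < 1" using ec kb(1) c8 by auto
  define F where "F = (\<lambda>s. P s + Q s)"
  have Fb: "(1 - e) * P t \<le> F t" "F t \<le> (1 + e) * P t" if "t > 0" for t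
    using kb(3)[OF that] ec unfolding F_def by (auto simp: algebra_simps abs_le_iff)
  have Fpos: "F t > 0" if "t > 0" for t
    using Fb(1)[OF that] e0 Ppos[OF that] by (smt (verit) mult_pos_pos)
  define F1 where "F1 = (\<lambda>s. P1 s + Q1 s)"
  define F2 where "F2 = (\<lambda>s. P2 s + Q2 s)"
  have hQa: "\<And>z. z > 0 \<Longrightarrow> (Q has_real_derivative Q1 z) (at z)"
    using hQ at_pos_within by (metis less_imp_le)
  have hQ1a: "\<And>z. z > 0 \<Longrightarrow> (Q1 has_real_derivative Q2 z) (at z)"
    using hQ1 at_pos_within by (metis less_imp_le)
  have hF: "(F has_real_derivative F1 t) (at t)" if "t > 0" for t
    unfolding F_def F1_def using that by (intro DERIV_add hP(1) hQa)
  have hF1: "(F1 has_real_derivative F2 t) (at t)" if "t > 0" for t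
    unfolding F2_def F1_def using that by (intro DERIV_add hP1 hQ1a)
  have F1b: "(1 - e) * P1 t \<le> F1 t" "F1 t \<le> (1 + e) * P1 t" if "t > 0" for t
    using kb(2)[OF that] ec unfolding F1_def by (auto simp: algebra_simps abs_le_iff)
  have F1pos: "F1 t > 0" if "t > 0" for t
    using F1b(1)[OF that] e0 P1pos[OF that] by (smt (verit) mult_pos_pos)
  define K where "K = (1 - e) * c7 / (1 + e)"
  have K: "K > 0" using e0 c7 by (simp add: K_def)
  have F2lb: "F2 t \<ge> K * F t / t\<^sup>2" if t: "t > 0" for t
  proof -
    have "F2 t \<ge> (1 - e) * P2 t" using Q2b[OF t] ec unfolding F2_def by (auto simp: algebra_simps abs_le_iff)
    moreover have "(1 - e) * P2 t \<ge> (1 - e) * (c7 / t\<^sup>2 * P t)"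
      using P2lb[OF t] e0 by (intro mult_left_mono) auto
    moreover have "(1 - e) * (c7 / t\<^sup>2 * P t) \<ge> K * F t / t\<^sup>2"
    proof -
      have "K * F t \<le> K * ((1 + e) * P t)" using K Fb(2)[OF t] by (intro mult_left_mono) auto
      also have "\<dots> = (1 - e) * c7 * P t" unfolding K_def using e0 by (simp add: field_simps)
      finally have "K * F t / t\<^sup>2 \<le> (1 - e) * c7 * P t / t\<^sup>2" by (simp add: divide_right_mono)
      then show ?thesis by (simp add: field_simps)
    qed
    ultimately show ?thesis by linarith
  qed
  have C2: "\<forall>\<epsilon>>0. \<forall>s t. 0 < s \<and> 0 < t \<and> \<bar>s - t\<bar> \<ge> \<epsilon> * max s t \<longrightarrow>
        F ((s + t) / 2) \<le> (1 - (K * \<epsilon>\<^sup>2 / 16) / (1 + K * \<epsilon>\<^sup>2 / 16)) * ((F s + F t) / 2)"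
    using c2_final[OF hF hF1 F1pos Fpos F2lb K] by blast
  have C3: "(F s) / s powr pm \<le> (\<beta> * (1 + e) / (1 - e)) * (F t / t powr pm) \<and>
        (\<beta> * (1 + e) / (1 - e)) * (F s / s powr pp) \<ge> F t / t powr pp" if st: "0 < s" "s \<le> t" for s t
  proof -
    have t: "t > 0" using st by simp
    have h: "P s / s powr pm \<le> \<beta> * (P t / t powr pm)" "\<beta> * (P s / s powr pp) \<ge> P t / t powr pp"
      using c3 st unfolding P_def by auto
    have b0: "\<beta> \<ge> 0"
    proof -
      have "0 < P s / s powr pm" using Ppos[OF st(1)] st by simp
      also have "\<dots> \<le> \<beta> * (P t / t powr pm)" by (rule h(1))
      finally have "0 < \<beta> * (P t / t powr pm)" .
      moreover have "0 \<le> P t / t powr pm" using Ppos[OF t] t by simp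
      ultimately show ?thesis by (smt (verit) mult_nonpos_nonneg)
    qed
    have Pt: "P t \<le> F t / (1 - e)" "P s \<le> F s / (1 - e)" using Fb(1)[OF t] Fb(1)[OF st(1)] e0 by (auto simp: field_simps)
    have "F s / s powr pm \<le> (1 + e) * P s / s powr pm" using Fb(2)[OF st(1)] by (simp add: divide_right_mono)
    also have "\<dots> = (1 + e) * (P s / s powr pm)" by simp
    also have "\<dots> \<le> (1 + e) * (\<beta> * (P t / t powr pm))" using h(1) e0 by (intro mult_left_mono) auto
    also have "\<dots> \<le> (1 + e) * (\<beta> * ((F t / (1 - e)) / t powr pm))"
      using Pt b0 e0 t by (intro mult_left_mono divide_right_mono) auto
    also have "\<dots> = (\<beta> * (1 + e) / (1 - e)) * (F t / t powr pm)" by simp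
    finally have A: "F s / s powr pm \<le> (\<beta> * (1 + e) / (1 - e)) * (F t / t powr pm)" .
    have "F t / t powr pp \<le> (1 + e) * P t / t powr pp" using Fb(2)[OF t] by (simp add: divide_right_mono)
    also have "\<dots> = (1 + e) * (P t / t powr pp)" by simp
    also have "\<dots> \<le> (1 + e) * (\<beta> * (P s / s powr pp))" using h(2) e0 by (intro mult_left_mono) auto
    also have "\<dots> \<le> (1 + e) * (\<beta> * ((F s / (1 - e)) / s powr pp))"
      using Pt b0 e0 st by (intro mult_left_mono divide_right_mono) auto
    also have "\<dots> = (\<beta> * (1 + e) / (1 - e)) * (F s / s powr pp)" by simp
    finally show ?thesis using A by simp
  qed
  have C4: "inverse (c1 * (1 + e) / (1 - e)) \<le> F 1 \<and> F 1 \<le> c1 * (1 + e) / (1 - e) \<and>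
        F 0 = 0 \<and> (\<forall>t>0. F t > 0)"
  proof (intro conjI allI impI Fpos)
    have p1: "inverse c1 \<le> P 1" "P 1 \<le> c1" using c4 by (auto simp: P_def)
    have "inverse (c1 * (1 + e) / (1 - e)) = (1 - e) * inverse c1 / (1 + e)" using e0 c1 by (simp add: field_simps)
    also have "\<dots> \<le> (1 - e) * inverse c1"
    proof -
      have "(1 - e) * inverse c1 / (1 + e) \<le> (1 - e) * inverse c1 / 1"
        using e0 c1 by (intro divide_left_mono) auto
      then show ?thesis by simp
    qed
    also have "\<dots> \<le> (1 - e) * P 1" using p1 e0 by (intro mult_left_mono) auto
    also have "\<dots> \<le> F 1" using Fb(1)[of 1] by simp
    finally show "inverse (c1 * (1 + e) / (1 - e)) \<le> F 1" .
    have "F 1 \<le> (1 + e) * P 1" using Fb(2)[of 1] by simp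
    also have "\<dots> \<le> (1 + e) * c1" using p1 e0 by (intro mult_left_mono) auto
    also have "\<dots> \<le> c1 * (1 + e) / (1 - e)"
    proof -
      have "(1 + e) * c1 / 1 \<le> (1 + e) * c1 / (1 - e)"
        using e0 c1 by (intro divide_left_mono) auto
      then show ?thesis by (simp add: mult.commute)
    qed
    finally show "F 1 \<le> c1 * (1 + e) / (1 - e)" .
    show "F 0 = 0" using c4 Q0 by (simp add: F_def P_def)
  qed
  have C5: "\<exists>D. (F has_real_derivative D) (at t) \<and> 0 < t * D \<and> t * D \<le> (c2 * (1 + e) / (1 - e)) * F t"
    if t: "t > 0" for t
  proof (intro exI conjI)
    show "(F has_real_derivative F1 t) (at t)" by (rule hF[OF t])
    show "0 < t * F1 t" using F1pos[OF t] t by simp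
    have "t * F1 t \<le> t * ((1 + e) * P1 t)" using F1b(2)[OF t] t by (intro mult_left_mono) auto
    also have "\<dots> = (1 + e) * (t * P1 t)" by simp
    also have "\<dots> \<le> (1 + e) * (c2 * P t)" using hP(3)[OF t] e0 by (intro mult_left_mono) auto
    also have "\<dots> \<le> (1 + e) * (c2 * (F t / (1 - e)))"
      using Fb(1)[OF t] e0 c2 by (intro mult_left_mono) (auto simp: field_simps)
    also have "\<dots> = (c2 * (1 + e) / (1 - e)) * F t" by simp
    finally show "t * F1 t \<le> (c2 * (1 + e) / (1 - e)) * F t" .
  qed
  show ?thesis
    using C2 C3 C4 C5 unfolding F_def P_def Q_def K_def by simp
qed



theorem theorem2p10:
  fixes \<Omega> :: "'a::euclidean_space set"
    and \<phi> \<psi> :: "real \<Rightarrow> 'a \<Rightarrow> 'a \<Rightarrow> real"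
    and c7 c8 :: real
  assumes "open \<Omega>" and "connected \<Omega>" and "\<Omega> \<noteq> {}"
    and C: "conds_C1_C5 \<Omega> \<phi>"
    and c7: "c7 > 0"
    and phi2: "ae_pairs \<Omega> (\<lambda>x y. \<forall>z>0.
          (deriv (\<lambda>s. \<phi> s x y) has_real_derivative deriv (deriv (\<lambda>s. \<phi> s x y)) z) (at z) \<and>
          deriv (deriv (\<lambda>s. \<phi> s x y)) z \<ge> c7 / z\<^sup>2 * \<phi> z x y)"
    and psi_meas: "\<forall>u. loc_integrable \<Omega> u \<longrightarrow>
          (\<lambda>p. \<psi> \<bar>u (fst p) - u (snd p)\<bar> (fst p) (snd p)) \<in> borel_measurable (lebesgue_on (\<Omega> \<times> \<Omega>))"
    and c8: "c8 < 1"
    and psi: "ae_pairs \<Omega> (\<lambda>x y. \<exists>\<psi>1 \<psi>2 :: real \<Rightarrow> real.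
          (\<forall>z\<ge>0. ((\<lambda>s. \<psi> s x y) has_real_derivative \<psi>1 z) (at z within {0..})) \<and>
          (\<forall>z\<ge>0. (\<psi>1 has_real_derivative \<psi>2 z) (at z within {0..})) \<and>
          continuous_on {0..} \<psi>2 \<and>
          \<psi> 0 x y = 0 \<and> \<psi>1 0 = 0 \<and>
          (\<forall>z>0. \<bar>\<psi>2 z\<bar> \<le> c8 * deriv (deriv (\<lambda>s. \<phi> s x y)) z))"
  shows "conds_C1_C5 \<Omega> (\<lambda>z x y. \<phi> z x y + \<psi> z x y)"
proof -
  have C1: "condC1 \<Omega> \<phi>" and C3: "condC3 \<Omega> \<phi>" and C4: "condC4 \<Omega> \<phi>" and C5: "condC5 \<Omega> \<phi>"
    using C by (auto simp: conds_C1_C5_def)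
  obtain c1 where c1: "0 < c1" and c4ae: "ae_pairs \<Omega> (\<lambda>x y. inverse c1 \<le> \<phi> 1 x y \<and> \<phi> 1 x y \<le> c1 \<and> \<phi> 0 x y = 0 \<and>
        (\<forall>t>0. \<phi> t x y > 0))"
    using C4 unfolding condC4_def by blast
  obtain c2 where c2: "1 < c2" and c5ae: "ae_pairs \<Omega> (\<lambda>x y. \<forall>t>0. \<exists>D. ((\<lambda>s. \<phi> s x y) has_real_derivative D) (at t) \<and>
        0 < t * D \<and> t * D \<le> c2 * \<phi> t x y)"
    using C5 unfolding condC5_def by blast
  obtain pm pp \<beta> :: real where pb: "1 < pm" "pm \<le> pp" "1 \<le> \<beta>" and c3ae: "ae_pairs \<Omega> (\<lambda>x y. \<forall>s t. 0 < s \<and> s \<le> t \<longrightarrow>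
        \<phi> s x y / s powr pm \<le> \<beta> * (\<phi> t x y / t powr pm) \<and>
        \<beta> * (\<phi> s x y / s powr pp) \<ge> \<phi> t x y / t powr pp)"
    using C3 unfolding condC3_def by blast
  define e where "e = max 0 c8"
  have e0: "0 \<le> e" "e < 1" using c8 by (auto simp: e_def)
  have c2': "c2 > 0" using c2 by simp
  have AEpt: "ae_pairs \<Omega> (\<lambda>x y. (\<forall>\<epsilon>>0. \<forall>s t. 0 < s \<and> 0 < t \<and> \<bar>s - t\<bar> \<ge> \<epsilon> * max s t \<longrightarrow>
        \<phi> ((s + t) / 2) x y + \<psi> ((s + t) / 2) x y \<le>
         (1 - (((1 - e) * c7 / (1 + e)) * \<epsilon>\<^sup>2 / 16) / (1 + ((1 - e) * c7 / (1 + e)) * \<epsilon>\<^sup>2 / 16)) *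
          (((\<phi> s x y + \<psi> s x y) + (\<phi> t x y + \<psi> t x y)) / 2))
    \<and> (\<forall>s t. 0 < s \<and> s \<le> t \<longrightarrow>
        (\<phi> s x y + \<psi> s x y) / s powr pm \<le> (\<beta> * (1 + e) / (1 - e)) * ((\<phi> t x y + \<psi> t x y) / t powr pm) \<and>
        (\<beta> * (1 + e) / (1 - e)) * ((\<phi> s x y + \<psi> s x y) / s powr pp) \<ge> (\<phi> t x y + \<psi> t x y) / t powr pp)
    \<and> (inverse (c1 * (1 + e) / (1 - e)) \<le> \<phi> 1 x y + \<psi> 1 x y \<and> \<phi> 1 x y + \<psi> 1 x y \<le> c1 * (1 + e) / (1 - e) \<and>
        \<phi> 0 x y + \<psi> 0 x y = 0 \<and> (\<forall>t>0. \<phi> t x y + \<psi> t x y > 0))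
    \<and> (\<forall>t>0. \<exists>D. ((\<lambda>s. \<phi> s x y + \<psi> s x y) has_real_derivative D) (at t) \<and>
        0 < t * D \<and> t * D \<le> (c2 * (1 + e) / (1 - e)) * (\<phi> t x y + \<psi> t x y)))"
    using c4ae c5ae c3ae phi2 psi
  proof eventually_elim
    case (elim p)
    show ?case
      apply (rule impI)
      apply (rule point[OF _ _ _ _ _ c7 c8 c1 c2' e_def])
      using elim by auto
  qed
  have q1: "1 \<le> (1 + e) / (1 - e)" using e0 by (simp add: le_divide_eq)
  show ?thesis unfolding conds_C1_C5_def
  proof (intro conjI)
    show "condC1 \<Omega> (\<lambda>z x y. \<phi> z x y + \<psi> z x y)"
      using C1 psi_meas unfolding condC1_def by (auto intro!: borel_measurable_add)
    show "condC2 \<Omega> (\<lambda>z x y. \<phi> z x y + \<psi> z x y)"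
      unfolding condC2_def
    proof (intro allI impI)
      fix \<epsilon> :: real assume ep: "\<epsilon> > 0"
      define \<kappa> where "\<kappa> = ((1 - e) * c7 / (1 + e)) * \<epsilon>\<^sup>2 / 16"
      have kp: "\<kappa> > 0" using e0 c7 ep by (simp add: \<kappa>_def)
      show "\<exists>\<delta>>0. \<delta> < 1 \<and> ae_pairs \<Omega> (\<lambda>x y. \<forall>s t. 0 < s \<and> 0 < t \<and> \<bar>s - t\<bar> \<ge> \<epsilon> * max s t \<longrightarrow>
        (\<lambda>z x y. \<phi> z x y + \<psi> z x y) ((s + t) / 2) x y \<le> (1 - \<delta>) * (((\<lambda>z x y. \<phi> z x y + \<psi> z x y) s x y + (\<lambda>z x y. \<phi> z x y + \<psi> z x y) t x y) / 2))"
      proof (intro exI conjI)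
        show "\<kappa> / (1 + \<kappa>) > 0" using kp by simp
        show "\<kappa> / (1 + \<kappa>) < 1" using kp by simp
        show "ae_pairs \<Omega> (\<lambda>x y. \<forall>s t. 0 < s \<and> 0 < t \<and> \<bar>s - t\<bar> \<ge> \<epsilon> * max s t \<longrightarrow>
          (\<lambda>z x y. \<phi> z x y + \<psi> z x y) ((s + t) / 2) x y \<le> (1 - \<kappa> / (1 + \<kappa>)) * (((\<lambda>z x y. \<phi> z x y + \<psi> z x y) s x y + (\<lambda>z x y. \<phi> z x y + \<psi> z x y) t x y) / 2))"
          using AEpt ep unfolding \<kappa>_def by (auto elim!: eventually_mono)
      qed
    qed
    show "condC3 \<Omega> (\<lambda>z x y. \<phi> z x y + \<psi> z x y)"
      unfolding condC3_def
    proof (intro exI conjI)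
      show "1 < pm" "pm \<le> pp" using pb by auto
      have "\<beta> * 1 \<le> \<beta> * ((1 + e) / (1 - e))" using q1 pb by (intro mult_left_mono) auto
      then show "1 \<le> \<beta> * (1 + e) / (1 - e)" using pb by simp
      show "ae_pairs \<Omega> (\<lambda>x y. \<forall>s t. 0 < s \<and> s \<le> t \<longrightarrow>
        (\<lambda>z x y. \<phi> z x y + \<psi> z x y) s x y / s powr pm \<le> (\<beta> * (1 + e) / (1 - e)) * ((\<lambda>z x y. \<phi> z x y + \<psi> z x y) t x y / t powr pm) \<and>
        (\<beta> * (1 + e) / (1 - e)) * ((\<lambda>z x y. \<phi> z x y + \<psi> z x y) s x y / s powr pp) \<ge> (\<lambda>z x y. \<phi> z x y + \<psi> z x y) t x y / t powr pp)"
        using AEpt by (auto elim!: eventually_mono)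
    qed
    show "condC4 \<Omega> (\<lambda>z x y. \<phi> z x y + \<psi> z x y)"
      unfolding condC4_def
    proof (intro exI conjI)
      show "0 < c1 * (1 + e) / (1 - e)" using c1 e0 by simp
      show "ae_pairs \<Omega> (\<lambda>x y. inverse (c1 * (1 + e) / (1 - e)) \<le> (\<lambda>z x y. \<phi> z x y + \<psi> z x y) 1 x y \<and>
         (\<lambda>z x y. \<phi> z x y + \<psi> z x y) 1 x y \<le> c1 * (1 + e) / (1 - e) \<and> (\<lambda>z x y. \<phi> z x y + \<psi> z x y) 0 x y = 0 \<and>
        (\<forall>t>0. (\<lambda>z x y. \<phi> z x y + \<psi> z x y) t x y > 0))"
        using AEpt by (auto elim!: eventually_mono)
    qed
    show "condC5 \<Omega> (\<lambda>z x y. \<phi> z x y + \<psi> z x y)"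
      unfolding condC5_def
    proof (intro exI conjI)
      have "c2 * 1 \<le> c2 * ((1 + e) / (1 - e))" using q1 c2 by (intro mult_left_mono) auto
      then show "1 < c2 * (1 + e) / (1 - e)" using c2 by simp
      show "ae_pairs \<Omega> (\<lambda>x y. \<forall>t>0. \<exists>D. ((\<lambda>s. (\<lambda>z x y. \<phi> z x y + \<psi> z x y) s x y) has_real_derivative D) (at t) \<and>
        0 < t * D \<and> t * D \<le> (c2 * (1 + e) / (1 - e)) * (\<lambda>z x y. \<phi> z x y + \<psi> z x y) t x y)"
        using AEpt by (auto elim!: eventually_mono)
    qed
  qed
qed

end
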